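(* Let $G$ be an execution graph, $T$ a thread and $q$ an await-iteration index of $T$ in $G$. If $t\in[\mathit{start}_G^T(q):\mathit{end}_G^T(q))$, then $P_T(k_G^T(t))$ is not an $\mathtt{await}$ statement.
   Context: Programs. There are finite sets $\mathit{Register}$, $\mathit{Value}$, $\mathit{Location}$; $\mathit{State}=\mathit{Register}\to\mathit{Value}$; an update is a partial map $\mathit{Register}\rightharpoonup\mathit{Value}$, and $(\sigma\ll\mu)(r)=\mu(r)$ if $r\in\mathrm{Dom}(\mu)$, else $\sigma(r)$. Events are reads $R^m(x)$, writes $W^m(x,v)$, fences $F^m$, error $E$. A program consists of finitely many threads $T$, each with a finite statement sequence $P_T(0),\dots,P_T(|P_T|-1)$. A statement is $\mathtt{step}(\epsilon,\delta)$ with $\epsilon:\mathit{State}\to\mathit{Event}$, $\delta:\mathit{State}\times(\mathit{Value}\cup\{\bot\})\to\mathit{Update}$, or $\mathtt{await}(n,\kappa)$ with $n\in\mathbb N$, $\kappa:\mathit{State}\to\{0,1\}$. Syntactic restriction: if $P_T(k)=\mathtt{await}(n,\cdot)$ then $n\le k$ and no $P_T(k')$ with $k'\in[k-n:k)$ is an await. ($[a:b)=\{a,\dots,b-1\}$.) An execution graph $G$ has a set $G.\mathrm E$ of triples $\langle T,t,e\rangle$ and a partial reads-from map $G.\mathrm{rf}$ from reads to writes. Thread-local semantics: $k_G^T(0)=0$, $\sigma_G^T(0)$ fixed; if $k_G^T(t)\ge|P_T|$ or no triple $\langle T,t,\cdot\rangle$ is in $G.\mathrm E$, execution stops ($N_G^T=t$).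 Otherwise with $S=P_T(k_G^T(t))$: $e_G^T(t)=\epsilon(\sigma_G^T(t))$ for $S=\mathtt{step}(\epsilon,\cdot)$, $F^{\mathrm{rlx}}$ for an await; $v_G^T(t)$ is the value of the write that $G.\mathrm{rf}$ assigns to $\langle T,t,e_G^T(t)\rangle$ if this is a read with defined rf, else $\bot$. For a step: $k_G^T(t+1)=k_G^T(t)+1$; if $e_G^T(t)$ is a read with $v_G^T(t)=\bot$ then $N_G^T=t+1$, $\sigma_G^T(t+1)=\sigma_G^T(t)$, else $\sigma_G^T(t+1)=\sigma_G^T(t)\ll\delta(\sigma_G^T(t),v_G^T(t))$. For $\mathtt{await}(n,\kappa)$: $\sigma_G^T(t+1)=\sigma_G^T(t)$ and $k_G^T(t+1)=k_G^T(t)+1$ if $\kappa(\sigma_G^T(t))=0$, else $k_G^T(t)-n$. Awaits: $\mathit{end}_G^T(0)<\mathit{end}_G^T(1)<\cdots$ enumerate the steps $t$ (with $t<N_G^T$) at which $P_T(k_G^T(t))$ is an await; $\mathit{len}_G^T(q)=n$ where $P_T(k_G^T(\mathit{end}_G^T(q)))=\mathtt{await}(n,\cdot)$; $\mathit{start}_G^T(q)=\mathit{end}_G^T(q)-\mathit{len}_G^T(q)$. *)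

theory Defs
  imports Main
begin

text \<open>Access modes of events (the concrete set of modes is irrelevant here;
  awaits produce relaxed fences).\<close>
datatype mode = Rlx | Acq | Rel | AcqRel | SC

datatype ('l, 'v) event =
    Rd mode 'l
  | Wr mode 'l 'v
  | Fn mode
  | Err

type_synonym ('r, 'v) state = "'r \<Rightarrow> 'v"
type_synonym ('r, 'v) update = "'r \<rightharpoonup> 'v"

definition upd :: "('r, 'v) state \<Rightarrow> ('r, 'v) update \<Rightarrow> ('r, 'v) state" where
  "upd \<sigma> \<mu> = (\<lambda>r. case \<mu> r of Some v \<Rightarrow> v | None \<Rightarrow> \<sigma> r)"

text \<open>Statements: step(\<epsilon>,\<delta>) and await(n,\<kappa>);
  the value argument of \<delta> is 'v option with None playing the role of \<bottom>,
  and \<kappa> returns bool (True = 1, False = 0).\<close>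
datatype ('r, 'l, 'v) stmt =
    Step "('r, 'v) state \<Rightarrow> ('l, 'v) event" "('r, 'v) state \<Rightarrow> 'v option \<Rightarrow> ('r, 'v) update"
  | Await nat "('r, 'v) state \<Rightarrow> bool"

fun is_await :: "('r, 'l, 'v) stmt \<Rightarrow> bool" where
  "is_await (Await _ _) = True"
| "is_await (Step _ _) = False"

fun await_len :: "('r, 'l, 'v) stmt \<Rightarrow> nat" where
  "await_len (Await n _) = n"
| "await_len (Step _ _) = 0"

fun is_read :: "('l, 'v) event \<Rightarrow> bool" where
  "is_read (Rd _ _) = True"
| "is_read _ = False"

fun is_write :: "('l, 'v) event \<Rightarrow> bool" where
  "is_write (Wr _ _ _) = True"
| "is_write _ = False"

fun wval :: "('l, 'v) event \<Rightarrow> 'v option" where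
  "wval (Wr _ _ v) = Some v"
| "wval _ = None"

type_synonym ('t, 'r, 'l, 'v) program = "'t \<Rightarrow> ('r, 'l, 'v) stmt list"

definition wf_program :: "('t, 'r, 'l, 'v) program \<Rightarrow> bool" where
  "wf_program P \<longleftrightarrow> (\<forall>T k. k < length (P T) \<longrightarrow> is_await (P T ! k) \<longrightarrow>
      await_len (P T ! k) \<le> k \<and>
      (\<forall>k'. k - await_len (P T ! k) \<le> k' \<and> k' < k \<longrightarrow> \<not> is_await (P T ! k')))"

type_synonym ('t, 'l, 'v) node = "'t \<times> nat \<times> ('l, 'v) event"

record ('t, 'l, 'v) egraph =
  Ev :: "('t, 'l, 'v) node set"
  rf :: "('t, 'l, 'v) node \<rightharpoonup> ('t, 'l, 'v) node"

fun nevt :: "('t, 'l, 'v) node \<Rightarrow> ('l, 'v) event" where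
  "nevt (_, _, e) = e"

definition wf_graph :: "('t, 'l, 'v) egraph \<Rightarrow> bool" where
  "wf_graph G \<longleftrightarrow> (\<forall>a b. rf G a = Some b \<longrightarrow> is_read (nevt a) \<and> is_write (nevt b))"

definition read_val :: "('t, 'l, 'v) egraph \<Rightarrow> ('t, 'l, 'v) node \<Rightarrow> 'v option" where
  "read_val G a = (if is_read (nevt a) then
      (case rf G a of Some w \<Rightarrow> wval (nevt w) | None \<Rightarrow> None) else None)"

text \<open>cfg P \<sigma>0 G T t = (k_G^T(t), \<sigma>_G^T(t)); computed for all t (stopping
  is handled separately by running).\<close>
primrec cfg :: "('t, 'r, 'l, 'v) program \<Rightarrow> ('t \<Rightarrow> ('r, 'v) state) \<Rightarrow> ('t, 'l, 'v) egraph
                 \<Rightarrow> 't \<Rightarrow> nat \<Rightarrow> nat \<times> ('r, 'v) state" where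
  "cfg P \<sigma>0 G T 0 = (0, \<sigma>0 T)"
| "cfg P \<sigma>0 G T (Suc t) =
     (let (k, \<sigma>) = cfg P \<sigma>0 G T t in
      if length (P T) \<le> k then (k, \<sigma>) else
      (case P T ! k of
         Step \<epsilon> \<delta> \<Rightarrow>
           (let e = \<epsilon> \<sigma>; v = read_val G (T, t, e) in
            (Suc k, if is_read e \<and> v = None then \<sigma> else upd \<sigma> (\<delta> \<sigma> v)))
       | Await n \<kappa> \<Rightarrow> (if \<kappa> \<sigma> then k - n else Suc k, \<sigma>)))"

definition kpc :: "('t, 'r, 'l, 'v) program \<Rightarrow> ('t \<Rightarrow> ('r, 'v) state) \<Rightarrow> ('t, 'l, 'v) egraph
                 \<Rightarrow> 't \<Rightarrow> nat \<Rightarrow> nat" where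
  "kpc P \<sigma>0 G T t = fst (cfg P \<sigma>0 G T t)"

definition sigma :: "('t, 'r, 'l, 'v) program \<Rightarrow> ('t \<Rightarrow> ('r, 'v) state) \<Rightarrow> ('t, 'l, 'v) egraph
                 \<Rightarrow> 't \<Rightarrow> nat \<Rightarrow> ('r, 'v) state" where
  "sigma P \<sigma>0 G T t = snd (cfg P \<sigma>0 G T t)"

definition evt :: "('t, 'r, 'l, 'v) program \<Rightarrow> ('t \<Rightarrow> ('r, 'v) state) \<Rightarrow> ('t, 'l, 'v) egraph
                 \<Rightarrow> 't \<Rightarrow> nat \<Rightarrow> ('l, 'v) event" where
  "evt P \<sigma>0 G T t = (case P T ! kpc P \<sigma>0 G T t of
      Step \<epsilon> _ \<Rightarrow> \<epsilon> (sigma P \<sigma>0 G T t)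
    | Await _ _ \<Rightarrow> Fn Rlx)"

definition stops :: "('t, 'r, 'l, 'v) program \<Rightarrow> ('t \<Rightarrow> ('r, 'v) state) \<Rightarrow> ('t, 'l, 'v) egraph
                 \<Rightarrow> 't \<Rightarrow> nat \<Rightarrow> bool" where
  "stops P \<sigma>0 G T t \<longleftrightarrow>
     length (P T) \<le> kpc P \<sigma>0 G T t
   \<or> (\<forall>e. (T, t, e) \<notin> Ev G)
   \<or> (\<exists>t'. t = Suc t' \<and> kpc P \<sigma>0 G T t' < length (P T)
          \<and> \<not> is_await (P T ! kpc P \<sigma>0 G T t')
          \<and> is_read (evt P \<sigma>0 G T t')
          \<and> read_val G (T, t', evt P \<sigma>0 G T t') = None)"

text \<open>t < N_G^T (N is the first stopping step; possibly infinite).\<close>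
definition running :: "('t, 'r, 'l, 'v) program \<Rightarrow> ('t \<Rightarrow> ('r, 'v) state) \<Rightarrow> ('t, 'l, 'v) egraph
                 \<Rightarrow> 't \<Rightarrow> nat \<Rightarrow> bool" where
  "running P \<sigma>0 G T t \<longleftrightarrow> (\<forall>t'\<le>t. \<not> stops P \<sigma>0 G T t')"

definition await_step :: "('t, 'r, 'l, 'v) program \<Rightarrow> ('t \<Rightarrow> ('r, 'v) state) \<Rightarrow> ('t, 'l, 'v) egraph
                 \<Rightarrow> 't \<Rightarrow> nat \<Rightarrow> bool" where
  "await_step P \<sigma>0 G T t \<longleftrightarrow> running P \<sigma>0 G T t \<and> is_await (P T ! kpc P \<sigma>0 G T t)"

text \<open>te = end_G^T(q): te is the q-th (0-based) await step.\<close>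
definition is_end :: "('t, 'r, 'l, 'v) program \<Rightarrow> ('t \<Rightarrow> ('r, 'v) state) \<Rightarrow> ('t, 'l, 'v) egraph
                 \<Rightarrow> 't \<Rightarrow> nat \<Rightarrow> nat \<Rightarrow> bool" where
  "is_end P \<sigma>0 G T q te \<longleftrightarrow> await_step P \<sigma>0 G T te
      \<and> card {t'. t' < te \<and> await_step P \<sigma>0 G T t'} = q"

definition await_index :: "('t, 'r, 'l, 'v) program \<Rightarrow> ('t \<Rightarrow> ('r, 'v) state) \<Rightarrow> ('t, 'l, 'v) egraph
                 \<Rightarrow> 't \<Rightarrow> nat \<Rightarrow> bool" where
  "await_index P \<sigma>0 G T q \<longleftrightarrow> (\<exists>te. is_end P \<sigma>0 G T q te)"

definition end_aw :: "('t, 'r, 'l, 'v) program \<Rightarrow> ('t \<Rightarrow> ('r, 'v) state) \<Rightarrow> ('t, 'l, 'v) egraph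
                 \<Rightarrow> 't \<Rightarrow> nat \<Rightarrow> nat" where
  "end_aw P \<sigma>0 G T q = (THE te. is_end P \<sigma>0 G T q te)"

definition len_aw :: "('t, 'r, 'l, 'v) program \<Rightarrow> ('t \<Rightarrow> ('r, 'v) state) \<Rightarrow> ('t, 'l, 'v) egraph
                 \<Rightarrow> 't \<Rightarrow> nat \<Rightarrow> nat" where
  "len_aw P \<sigma>0 G T q = await_len (P T ! kpc P \<sigma>0 G T (end_aw P \<sigma>0 G T q))"

definition start_aw :: "('t, 'r, 'l, 'v) program \<Rightarrow> ('t \<Rightarrow> ('r, 'v) state) \<Rightarrow> ('t, 'l, 'v) egraph
                 \<Rightarrow> 't \<Rightarrow> nat \<Rightarrow> nat" where
  "start_aw P \<sigma>0 G T q = end_aw P \<sigma>0 G T q - len_aw P \<sigma>0 G T q"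

end

theory Submission
  imports Defs
begin

lemma kpc_Suc:
  "kpc P \<sigma>0 G T (Suc s) = (if length (P T) \<le> kpc P \<sigma>0 G T s then kpc P \<sigma>0 G T s else
     (case P T ! kpc P \<sigma>0 G T s of Step e d \<Rightarrow> Suc (kpc P \<sigma>0 G T s)
      | Await n \<kappa> \<Rightarrow> (if \<kappa> (sigma P \<sigma>0 G T s) then kpc P \<sigma>0 G T s - n else Suc (kpc P \<sigma>0 G T s))))"
  by (simp add: kpc_def sigma_def Let_def split: prod.split stmt.split)

lemma running_lt:
  assumes "running P \<sigma>0 G T te" "s \<le> te"
  shows "kpc P \<sigma>0 G T s < length (P T)"
  using assms unfolding running_def stops_def by force

lemma back_aux:
  assumes wf: "wf_program P" and run: "running P \<sigma>0 G T te"
    and aw: "P T ! kpc P \<sigma>0 G T te = Await n \<kappa>"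
  shows "d \<le> n \<Longrightarrow> d \<le> te \<Longrightarrow> kpc P \<sigma>0 G T (te - d) = kpc P \<sigma>0 G T te - d
     \<and> (0 < d \<longrightarrow> \<not> is_await (P T ! kpc P \<sigma>0 G T (te - d)))"
proof (induction d)
  case 0
  then show ?case by simp
next
  case (Suc d)
  define k where "k = kpc P \<sigma>0 G T te"
  define s where "s = te - Suc d"
  define j where "j = kpc P \<sigma>0 G T s"
  have sS: "Suc s = te - d" using Suc.prems unfolding s_def by simp
  have IH: "kpc P \<sigma>0 G T (Suc s) = k - d" using Suc sS k_def by simp
  have klt: "k < length (P T)" using running_lt[OF run] k_def by simp
  have wfk: "n \<le> k \<and> (\<forall>k'. k - n \<le> k' \<and> k' < k \<longrightarrow> \<not> is_await (P T ! k'))"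
    using wf klt aw unfolding wf_program_def k_def by (metis await_len.simps(1) is_await.simps(1))
  have jlt: "j < length (P T)" using running_lt[OF run, of s] j_def s_def by simp
  have dn: "d < n" using Suc.prems by simp
  show ?case
  proof (cases "P T ! j")
    case (Step e dd)
    then have "kpc P \<sigma>0 G T (Suc s) = Suc j" using kpc_Suc[of P \<sigma>0 G T s] jlt j_def by simp
    then have "j = k - Suc d" using IH by simp
    moreover have "k - n \<le> k - Suc d" "k - Suc d < k" using dn wfk by auto
    ultimately show ?thesis using Step j_def s_def k_def by simp
  next
    case (Await m \<kappa>')
    have wfj: "m \<le> j \<and> (\<forall>k'. j - m \<le> k' \<and> k' < j \<longrightarrow> \<not> is_await (P T ! k'))"
      using wf jlt Await unfolding wf_program_def by (metis await_len.simps(1) is_await.simps(1))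
    have False
    proof (cases "\<kappa>' (sigma P \<sigma>0 G T s)")
      case True
      then have "kpc P \<sigma>0 G T (Suc s) = j - m" using kpc_Suc[of P \<sigma>0 G T s] jlt j_def Await by simp
      then have e: "j - m = k - d" using IH by simp
      show False
      proof (cases "j < k")
        case True
        then show ?thesis using wfk e Await dn by (metis diff_le_mono2 dual_order.trans diff_le_self is_await.simps(1) less_imp_le_nat)
      next
        case False
        show ?thesis
        proof (cases "j = k")
          case True
          then have "m = n" using Await aw k_def by simp
          then show ?thesis using True e wfk dn wfj by linarith
        next
          case False
          then have "k < j" using \<open>\<not> j < k\<close> by simp
          moreover have "j - m \<le> k" using e by simp
          ultimately show ?thesis using wfj aw k_def by auto
        qed
      qed
    next
      case False
      then have "kpc P \<sigma>0 G T (Suc s) = Suc j" using kpc_Suc[of P \<sigma>0 G T s] jlt j_def Await by simp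
      then have "j = k - Suc d" using IH by simp
      moreover have "k - n \<le> k - Suc d" "k - Suc d < k" using dn wfk by auto
      ultimately show False using wfk Await by auto
    qed
    then show ?thesis ..
  qed
qed

lemma is_end_unique:
  assumes "is_end P \<sigma>0 G T q a" "is_end P \<sigma>0 G T q b"
  shows "a = b"
proof (rule ccontr)
  assume "a \<noteq> b"
  then consider "a < b" | "b < a" by linarith
  then show False
  proof cases
    case 1
    have "{t'. t' < a \<and> await_step P \<sigma>0 G T t'} \<subset> {t'. t' < b \<and> await_step P \<sigma>0 G T t'}"
      using 1 assms(1) unfolding is_end_def by auto
    then have "card {t'. t' < a \<and> await_step P \<sigma>0 G T t'} < card {t'. t' < b \<and> await_step P \<sigma>0 G T t'}"
      by (rule psubset_card_mono[rotated]) simp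
    then show False using assms unfolding is_end_def by simp
  next
    case 2
    have "{t'. t' < b \<and> await_step P \<sigma>0 G T t'} \<subset> {t'. t' < a \<and> await_step P \<sigma>0 G T t'}"
      using 2 assms(2) unfolding is_end_def by auto
    then have "card {t'. t' < b \<and> await_step P \<sigma>0 G T t'} < card {t'. t' < a \<and> await_step P \<sigma>0 G T t'}"
      by (rule psubset_card_mono[rotated]) simp
    then show False using assms unfolding is_end_def by simp
  qed
qed

theorem lemma2:
  fixes P :: "('t::finite, 'r::finite, 'l::finite, 'v::finite) program"
    and \<sigma>0 :: "'t \<Rightarrow> ('r, 'v) state"
    and G :: "('t, 'l, 'v) egraph"
    and T :: 't and q t :: nat
  assumes "wf_program P"
    and "wf_graph G"
    and "await_index P \<sigma>0 G T q"
    and "start_aw P \<sigma>0 G T q \<le> t"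
    and "t < end_aw P \<sigma>0 G T q"
  shows "\<not> is_await (P T ! kpc P \<sigma>0 G T t)"
proof -
  obtain te where te: "is_end P \<sigma>0 G T q te" using assms(3) unfolding await_index_def by blast
  have E: "end_aw P \<sigma>0 G T q = te" unfolding end_aw_def
    by (rule the_equality, rule te, erule is_end_unique[OF _ te])
  have run: "running P \<sigma>0 G T te" and isaw: "is_await (P T ! kpc P \<sigma>0 G T te)"
    using te unfolding is_end_def await_step_def by auto
  obtain n \<kappa> where aw: "P T ! kpc P \<sigma>0 G T te = Await n \<kappa>"
    using isaw by (cases "P T ! kpc P \<sigma>0 G T te") auto
  have L: "len_aw P \<sigma>0 G T q = n" unfolding len_aw_def E aw by simp
  have "te - t \<le> n" using assms(4) unfolding start_aw_def E L by linarith
  from back_aux[OF assms(1) run aw this] have "0 < te - t \<longrightarrow> \<not> is_await (P T ! kpc P \<sigma>0 G T (te - (te - t)))" by simp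
  moreover have "te - (te - t) = t" "0 < te - t" using assms(5) E by auto
  ultimately show ?thesis by simp
qed

end
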